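(* Let $\Delta$ be a finite domain, $\mathcal{L}$ a first-order language, $\Omega$ the set of all possible worlds on $\Delta$ w.r.t. $\mathcal{L}$, $R$ a binary predicate of $\mathcal{L}$, $k\ge 1$ an integer, and $\Gamma$ a first-order sentence over $\mathcal{L}$. Let $f_1^R,\dots,f_k^R$ be new binary predicates not in $\mathcal{L}$, with weights $w(f_i^R)=\overline{w}(f_i^R)=1$, and let $\Omega_{\mathrm{ext}}$ be the set of all possible worlds on $\Delta$ w.r.t. $\mathcal{L}$ extended by $f_1^R,\dots,f_k^R$. Define $$\Phi=(|R|=k|\Delta|)\wedge\Big(\forall x,y: R(x,y)\Leftrightarrow\bigvee_{i=1}^k f_i^R(x,y)\Big)\wedge\bigwedge_{i=1}^k\big(\forall x\,\exists y: f_i^R(x,y)\big)\wedge\bigwedge_{i\ne j}\big(\forall x,y:\neg f_i^R(x,y)\vee\neg f_j^R(x,y)\big).$$ Then for all weight functions $w,\overline{w}$ on the predicates of $\mathcal{L}$, $$\mathrm{WFOMC}\big(\Gamma\wedge\forall x\,\exists_{=k}y:R(x,y),\,w,\overline{w},\Omega\big)=\frac{1}{(k!)^{|\Delta|}}\,\mathrm{WFOMC}(\Gamma\wedge\Phi,\,w,\overline{w},\Omega_{\mathrm{ext}}).$$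
   Context: A possible world on $\Delta$ is a set of ground atoms over the language's predicates and $\Delta$. $N(R,\omega)$ is the number of ground atoms of $R$ true in $\omega$. For a set $\Omega$ of possible worlds, $\mathrm{WFOMC}(\Gamma,w,\overline{w},\Omega)=\sum_{\omega\in\Omega,\,\omega\models\Gamma}\prod_{R} w(R)^{N(R,\omega)}\overline{w}(R)^{|\Delta|^{\mathrm{arity}(R)}-N(R,\omega)}$, the product ranging over the predicates of the language of $\Omega$. The cardinality constraint $|R|=c$ holds in $\omega$ iff $N(R,\omega)=c$. $\forall x\,\exists_{=k}y:R(x,y)$ holds iff every $x\in\Delta$ has exactly $k$ distinct $y\in\Delta$ with $R(x,y)$. *)

theory Defs
  imports Complex_Main
begin

datatype 'p fm =
    Atom 'p "nat list"
  | Eq nat nat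
  | Neg "'p fm"
  | Conj "'p fm" "'p fm"
  | Disj "'p fm" "'p fm"
  | Ex nat "'p fm"
  | All nat "'p fm"

fun freevars :: "'p fm \<Rightarrow> nat set" where
  "freevars (Atom P vs) = set vs"
| "freevars (Eq x y) = {x, y}"
| "freevars (Neg \<phi>) = freevars \<phi>"
| "freevars (Conj \<phi> \<psi>) = freevars \<phi> \<union> freevars \<psi>"
| "freevars (Disj \<phi> \<psi>) = freevars \<phi> \<union> freevars \<psi>"
| "freevars (Ex x \<phi>) = freevars \<phi> - {x}"
| "freevars (All x \<phi>) = freevars \<phi> - {x}"

fun wf_fm :: "'p set \<Rightarrow> ('p \<Rightarrow> nat) \<Rightarrow> 'p fm \<Rightarrow> bool" where
  "wf_fm L ar (Atom P vs) = (P \<in> L \<and> length vs = ar P)"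
| "wf_fm L ar (Eq x y) = True"
| "wf_fm L ar (Neg \<phi>) = wf_fm L ar \<phi>"
| "wf_fm L ar (Conj \<phi> \<psi>) = (wf_fm L ar \<phi> \<and> wf_fm L ar \<psi>)"
| "wf_fm L ar (Disj \<phi> \<psi>) = (wf_fm L ar \<phi> \<and> wf_fm L ar \<psi>)"
| "wf_fm L ar (Ex x \<phi>) = wf_fm L ar \<phi>"
| "wf_fm L ar (All x \<phi>) = wf_fm L ar \<phi>"

definition fo_sentence :: "'p set \<Rightarrow> ('p \<Rightarrow> nat) \<Rightarrow> 'p fm \<Rightarrow> bool" where
  "fo_sentence L ar \<phi> \<longleftrightarrow> wf_fm L ar \<phi> \<and> freevars \<phi> = {}"

type_synonym ('p, 'd) world = "('p \<times> 'd list) set"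

fun sat :: "'d set \<Rightarrow> ('p, 'd) world \<Rightarrow> (nat \<Rightarrow> 'd) \<Rightarrow> 'p fm \<Rightarrow> bool" where
  "sat D \<omega> \<nu> (Atom P vs) = ((P, map \<nu> vs) \<in> \<omega>)"
| "sat D \<omega> \<nu> (Eq x y) = (\<nu> x = \<nu> y)"
| "sat D \<omega> \<nu> (Neg \<phi>) = (\<not> sat D \<omega> \<nu> \<phi>)"
| "sat D \<omega> \<nu> (Conj \<phi> \<psi>) = (sat D \<omega> \<nu> \<phi> \<and> sat D \<omega> \<nu> \<psi>)"
| "sat D \<omega> \<nu> (Disj \<phi> \<psi>) = (sat D \<omega> \<nu> \<phi> \<or> sat D \<omega> \<nu> \<psi>)"
| "sat D \<omega> \<nu> (Ex x \<phi>) = (\<exists>d\<in>D. sat D \<omega> (\<nu>(x := d)) \<phi>)"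
| "sat D \<omega> \<nu> (All x \<phi>) = (\<forall>d\<in>D. sat D \<omega> (\<nu>(x := d)) \<phi>)"

text \<open>Truth of a sentence in a world (the valuation is irrelevant for sentences).\<close>
definition models :: "'d set \<Rightarrow> ('p, 'd) world \<Rightarrow> 'p fm \<Rightarrow> bool" where
  "models D \<omega> \<phi> \<longleftrightarrow> sat D \<omega> (\<lambda>_. undefined) \<phi>"

definition ground_atoms :: "'p set \<Rightarrow> ('p \<Rightarrow> nat) \<Rightarrow> 'd set \<Rightarrow> ('p \<times> 'd list) set" where
  "ground_atoms L ar D = {(P, xs). P \<in> L \<and> length xs = ar P \<and> set xs \<subseteq> D}"

definition worlds :: "'p set \<Rightarrow> ('p \<Rightarrow> nat) \<Rightarrow> 'd set \<Rightarrow> ('p, 'd) world set" where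
  "worlds L ar D = Pow (ground_atoms L ar D)"

definition N :: "'p \<Rightarrow> ('p, 'd) world \<Rightarrow> nat" where
  "N R \<omega> = card {xs. (R, xs) \<in> \<omega>}"

definition WFOMC :: "(('p, 'd) world \<Rightarrow> bool) \<Rightarrow> ('p \<Rightarrow> real) \<Rightarrow> ('p \<Rightarrow> real)
    \<Rightarrow> 'p set \<Rightarrow> ('p \<Rightarrow> nat) \<Rightarrow> 'd set \<Rightarrow> real" where
  "WFOMC \<Gamma> w wb L ar D =
     (\<Sum>\<omega>\<in>{\<omega> \<in> worlds L ar D. \<Gamma> \<omega>}.
        \<Prod>R\<in>L. w R ^ N R \<omega> * wb R ^ (card D ^ ar R - N R \<omega>))"

definition exactly_k :: "'p \<Rightarrow> nat \<Rightarrow> 'd set \<Rightarrow> ('p, 'd) world \<Rightarrow> bool" where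
  "exactly_k R k D \<omega> \<longleftrightarrow> (\<forall>x\<in>D. card {y\<in>D. (R, [x, y]) \<in> \<omega>} = k)"

definition Phi :: "'p \<Rightarrow> (nat \<Rightarrow> 'p) \<Rightarrow> nat \<Rightarrow> 'd set \<Rightarrow> ('p, 'd) world \<Rightarrow> bool" where
  "Phi R f k D \<omega> \<longleftrightarrow>
     N R \<omega> = k * card D \<and>
     (\<forall>x\<in>D. \<forall>y\<in>D. (R, [x, y]) \<in> \<omega> \<longleftrightarrow> (\<exists>i\<in>{1..k}. (f i, [x, y]) \<in> \<omega>)) \<and>
     (\<forall>i\<in>{1..k}. \<forall>x\<in>D. \<exists>y\<in>D. (f i, [x, y]) \<in> \<omega>) \<and>
     (\<forall>i\<in>{1..k}. \<forall>j\<in>{1..k}. i \<noteq> j \<longrightarrow>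
        (\<forall>x\<in>D. \<forall>y\<in>D. (f i, [x, y]) \<notin> \<omega> \<or> (f j, [x, y]) \<notin> \<omega>))"

end

theory Submission imports Defs "HOL-Combinatorics.Multiset_Permutations" "HOL-Library.FuncSet"
begin

lemma sat_restr:
  assumes "wf_fm L ar \<phi>"
  shows "sat D \<omega> \<nu> \<phi> = sat D {a\<in>\<omega>. fst a \<in> L} \<nu> \<phi>"
  using assms by (induction \<phi> arbitrary: \<nu>) auto


definition Sx :: "'d set \<Rightarrow> 'p \<Rightarrow> ('p,'d) world \<Rightarrow> 'd \<Rightarrow> 'd set" where
  "Sx D R \<omega> x = {y\<in>D. (R,[x,y])\<in>\<omega>}"

lemma ga_mem:
  assumes "\<omega> \<in> worlds L ar D" "(P,xs)\<in>\<omega>"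
  shows "P\<in>L \<and> length xs = ar P \<and> set xs \<subseteq> D"
  using assms by (auto simp: worlds_def ground_atoms_def)

lemma len2: "length xs = 2 \<Longrightarrow> \<exists>a b. xs = [a,b]"
  by (cases xs; cases "tl xs") auto

lemma NR_sum:
  assumes "\<omega> \<in> worlds L ar D" "ar R = 2" "finite D"
  shows "N R \<omega> = (\<Sum>x\<in>D. card (Sx D R \<omega> x))"
proof -
  have "{xs. (R,xs)\<in>\<omega>} = (\<lambda>(x,y). [x,y]) ` (SIGMA x:D. Sx D R \<omega> x)"
  proof (rule set_eqI, rule iffI)
    fix xs assume "xs \<in> {xs. (R,xs)\<in>\<omega>}"
    hence m: "(R,xs)\<in>\<omega>" by simp
    have g: "length xs = 2" "set xs \<subseteq> D" using ga_mem[OF assms(1) m] assms(2) by auto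
    then obtain a b where ab: "xs=[a,b]" using len2 by blast
    with g have "a\<in>D" "b\<in>D" by auto
    with ab m have "(a,b) \<in> (SIGMA x:D. Sx D R \<omega> x)" by (simp add: Sx_def)
    thus "xs \<in> (\<lambda>(x,y). [x,y]) ` (SIGMA x:D. Sx D R \<omega> x)" using ab
      by (simp add: image_iff)
  qed (auto simp: Sx_def)
  moreover have "inj_on (\<lambda>(x,y). [x,y]) (SIGMA x:D. Sx D R \<omega> x)"
    by (auto simp: inj_on_def)
  ultimately have "N R \<omega> = card (SIGMA x:D. Sx D R \<omega> x)"
    unfolding N_def by (simp add: card_image)
  also have "\<dots> = (\<Sum>x\<in>D. card (Sx D R \<omega> x))"
    using assms(3) by (intro card_SigmaI) (auto simp: Sx_def)
  finally show ?thesis .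
qed


lemma Phi_struct:
  assumes fin: "finite D" and arR: "ar R = 2"
    and W: "\<omega> \<in> worlds L' ar D"
    and P: "Phi R f k D \<omega>"
  shows "\<forall>x\<in>D. card (Sx D R \<omega> x) = k \<and> (\<forall>i\<in>{1..k}. \<exists>!y. (f i, [x,y]) \<in> \<omega>)"
proof -
  from P have NR: "N R \<omega> = k * card D"
    and RF: "\<forall>x\<in>D. \<forall>y\<in>D. (R, [x, y]) \<in> \<omega> \<longleftrightarrow> (\<exists>i\<in>{1..k}. (f i, [x, y]) \<in> \<omega>)"
    and tot: "\<forall>i\<in>{1..k}. \<forall>x\<in>D. \<exists>y\<in>D. (f i, [x, y]) \<in> \<omega>"
    and dis: "\<forall>i\<in>{1..k}. \<forall>j\<in>{1..k}. i \<noteq> j \<longrightarrow>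
        (\<forall>x\<in>D. \<forall>y\<in>D. (f i, [x, y]) \<notin> \<omega> \<or> (f j, [x, y]) \<notin> \<omega>)"
    unfolding Phi_def by auto
  from tot obtain g where g: "\<And>i x. i\<in>{1..k} \<Longrightarrow> x\<in>D \<Longrightarrow> g i x \<in> D \<and> (f i, [x, g i x]) \<in> \<omega>"
    by metis
  have inj: "inj_on (\<lambda>i. g i x) {1..k}" if x: "x\<in>D" for x
  proof (rule inj_onI)
    fix i j assume ij: "i\<in>{1..k}" "j\<in>{1..k}" "g i x = g j x"
    show "i = j"
    proof (rule ccontr)
      assume "i \<noteq> j"
      with dis ij x g[of i x] g[of j x] show False by metis
    qed
  qed
  have sub: "(\<lambda>i. g i x) ` {1..k} \<subseteq> Sx D R \<omega> x" if x: "x\<in>D" for x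
    using g RF x by (auto simp: Sx_def) (metis atLeastAtMost_iff)
  have finS: "finite (Sx D R \<omega> x)" for x using fin by (simp add: Sx_def)
  have ge: "k \<le> card (Sx D R \<omega> x)" if x: "x\<in>D" for x
    using card_inj_on_le[OF inj[OF x] sub[OF x] finS] by simp
  have "(\<Sum>x\<in>D. card (Sx D R \<omega> x) - k) = (\<Sum>x\<in>D. card (Sx D R \<omega> x)) - (\<Sum>x\<in>D. k)"
    using ge by (intro sum_subtractf_nat) auto
  also have "\<dots> = 0" using NR NR_sum[OF W arR fin] by simp
  finally have "\<forall>x\<in>D. card (Sx D R \<omega> x) - k = 0" using fin by simp
  hence eqk: "card (Sx D R \<omega> x) = k" if "x\<in>D" for x using ge[OF that] that by force
  have img: "(\<lambda>i. g i x) ` {1..k} = Sx D R \<omega> x" if x: "x\<in>D" for x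
    using card_subset_eq[OF finS sub[OF x]] card_image[OF inj[OF x]] eqk[OF x] by simp
  have uniq: "\<exists>!y. (f i, [x,y]) \<in> \<omega>" if x: "x\<in>D" and i: "i\<in>{1..k}" for x i
  proof (rule ex1I[of _ "g i x"])
    show "(f i, [x, g i x]) \<in> \<omega>" using g x i by blast
  next
    fix y assume y: "(f i, [x, y]) \<in> \<omega>"
    have "set [x,y] \<subseteq> D" using ga_mem[OF W y] by blast
    hence yD: "y \<in> D" by simp
    with RF x y i have "y \<in> Sx D R \<omega> x" by (auto simp: Sx_def)
    with img[OF x] obtain j where j: "j\<in>{1..k}" "y = g j x" by (metis imageE)
    show "y = g i x"
    proof (rule ccontr)
      assume "y \<noteq> g i x"
      hence "i \<noteq> j" using j by auto
      with dis i j x y yD g[of j x] show False by metis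
    qed
  qed
  show ?thesis using eqk uniq by blast
qed


definition restr :: "'p set \<Rightarrow> ('p,'d) world \<Rightarrow> ('p,'d) world" where
  "restr L \<omega> = {a\<in>\<omega>. fst a \<in> L}"

definition Psi :: "(nat \<Rightarrow> 'p) \<Rightarrow> nat \<Rightarrow> 'd set \<Rightarrow> ('p,'d) world \<Rightarrow> ('d \<Rightarrow> 'd list) \<Rightarrow> ('p,'d) world" where
  "Psi f k D \<omega>0 \<psi> = \<omega>0 \<union> {(f i, [x, \<psi> x ! (i-1)]) | x i. x\<in>D \<and> i\<in>{1..k}}"

lemma models_restr:
  assumes "fo_sentence L ar \<Gamma>"
  shows "models D \<omega> \<Gamma> = models D (restr L \<omega>) \<Gamma>"
  using sat_restr assms unfolding models_def fo_sentence_def restr_def by blast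

context
  fixes D :: "'d set" and L :: "'p set" and ar :: "'p \<Rightarrow> nat" and R :: 'p and k :: nat
    and f :: "nat \<Rightarrow> 'p"
  assumes fin: "finite D" and RL: "R \<in> L" and arR: "ar R = 2"
    and injf: "inj_on f {1..k}" and fL: "\<forall>i\<in>{1..k}. f i \<notin> L \<and> ar (f i) = 2"
begin

lemma Psi_f:
  assumes W0: "\<omega>0 \<in> worlds L ar D" and i: "i\<in>{1..k}"
  shows "(f i, [x,y]) \<in> Psi f k D \<omega>0 \<psi> \<longleftrightarrow> x \<in> D \<and> y = \<psi> x ! (i-1)"
proof
  assume a: "(f i, [x,y]) \<in> Psi f k D \<omega>0 \<psi>"
  have "(f i, [x,y]) \<notin> \<omega>0" using ga_mem[OF W0] fL i by blast
  with a obtain x' i' where "x'\<in>D" "i'\<in>{1..k}" "f i = f i'" "[x,y] = [x', \<psi> x' ! (i'-1)]"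
    unfolding Psi_def by blast
  moreover have "i = i'" using injf i calculation(2,3) by (meson inj_onD)
  ultimately show "x \<in> D \<and> y = \<psi> x ! (i-1)" by simp
next
  assume "x \<in> D \<and> y = \<psi> x ! (i-1)"
  thus "(f i, [x,y]) \<in> Psi f k D \<omega>0 \<psi>" using i unfolding Psi_def by blast
qed

lemma Sx_restr: "Sx D R (restr L \<omega>) x = Sx D R \<omega> x"
  using RL by (auto simp: Sx_def restr_def)

lemma N_restr: "N R (restr L \<omega>) = N R \<omega>"
  using RL by (auto simp: N_def restr_def)


lemma Psi_R: "(R, xs) \<in> Psi f k D \<omega>0 \<psi> \<longleftrightarrow> (R, xs) \<in> \<omega>0"
proof -
  have "(R,xs) \<notin> {(f i, [x, \<psi> x ! (i-1)]) | x i. x\<in>D \<and> i\<in>{1..k}}"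
  proof
    assume "(R,xs) \<in> {(f i, [x, \<psi> x ! (i-1)]) | x i. x\<in>D \<and> i\<in>{1..k}}"
    then obtain i where "i\<in>{1..k}" "R = f i" by blast
    with fL RL show False by auto
  qed
  thus ?thesis unfolding Psi_def by blast
qed

lemma fiber_sub:
  assumes W0: "\<omega>0 \<in> worlds L ar D" and E: "exactly_k R k D \<omega>0"
    and \<psi>: "\<psi> \<in> (\<Pi>\<^sub>E x\<in>D. permutations_of_set (Sx D R \<omega>0 x))"
  shows "Psi f k D \<omega>0 \<psi> \<in> worlds (L \<union> f ` {1..k}) ar D"
    "Phi R f k D (Psi f k D \<omega>0 \<psi>)" "restr L (Psi f k D \<omega>0 \<psi>) = \<omega>0"
proof -
  let ?\<omega> = "Psi f k D \<omega>0 \<psi>"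
  have ck: "card (Sx D R \<omega>0 x) = k" if "x\<in>D" for x
    using E that by (simp add: exactly_k_def Sx_def)
  have setp0: "set (\<psi> x) = Sx D R \<omega>0 x \<and> distinct (\<psi> x)" if "x\<in>D" for x
    using \<psi> that by (auto simp: PiE_iff permutations_of_set_def)
  have setp: "set (\<psi> x) = Sx D R \<omega>0 x" "distinct (\<psi> x)" "length (\<psi> x) = k" if "x\<in>D" for x
  proof -
    show "set (\<psi> x) = Sx D R \<omega>0 x" "distinct (\<psi> x)" using setp0[OF that] by auto
    have "length (\<psi> x) = card (set (\<psi> x))" using setp0[OF that] distinct_card by metis
    thus "length (\<psi> x) = k" using setp0[OF that] ck[OF that] by simp
  qed
  have nthD: "\<psi> x ! (i-1) \<in> Sx D R \<omega>0 x" if "x\<in>D" "i\<in>{1..k}" for x i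
  proof -
    have "i-1 < length (\<psi> x)" using setp(3)[OF that(1)] that(2) by auto
    hence "\<psi> x ! (i-1) \<in> set (\<psi> x)" by (rule nth_mem)
    thus ?thesis using setp(1)[OF that(1)] by simp
  qed
  have SxD: "Sx D R \<omega>0 x \<subseteq> D" for x by (auto simp: Sx_def)
  have w1: "\<omega>0 \<subseteq> ground_atoms (L \<union> f ` {1..k}) ar D"
    using W0 by (auto simp: worlds_def ground_atoms_def)
  have w2: "{(f i, [x, \<psi> x ! (i-1)]) | x i. x\<in>D \<and> i\<in>{1..k}} \<subseteq> ground_atoms (L \<union> f ` {1..k}) ar D"
  proof
    fix a assume "a \<in> {(f i, [x, \<psi> x ! (i-1)]) | x i. x\<in>D \<and> i\<in>{1..k}}"
    then obtain x i where a: "a = (f i, [x, \<psi> x ! (i-1)])" "x\<in>D" "i\<in>{1..k}" by blast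
    have "\<psi> x ! (i-1) \<in> D" using nthD[OF a(2,3)] SxD by blast
    thus "a \<in> ground_atoms (L \<union> f ` {1..k}) ar D" using a fL by (auto simp: ground_atoms_def)
  qed
  show "?\<omega> \<in> worlds (L \<union> f ` {1..k}) ar D"
    using w1 w2 unfolding worlds_def Psi_def by blast
  have r1: "\<omega>0 \<subseteq> restr L ?\<omega>"
  proof
    fix a assume a: "a \<in> \<omega>0"
    obtain P xs where "a = (P,xs)" by force
    hence "fst a \<in> L" using ga_mem[OF W0] a by auto
    thus "a \<in> restr L ?\<omega>" using a unfolding restr_def Psi_def by blast
  qed
  have r2: "restr L ?\<omega> \<subseteq> \<omega>0" using fL unfolding restr_def Psi_def by auto
  show "restr L ?\<omega> = \<omega>0" using r1 r2 by blast
  have NR: "N R ?\<omega> = k * card D"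
  proof -
    have "N R ?\<omega> = N R \<omega>0" unfolding N_def using Psi_R by simp
    also have "\<dots> = (\<Sum>x\<in>D. card (Sx D R \<omega>0 x))" by (rule NR_sum[OF W0 arR fin])
    also have "\<dots> = k * card D" using ck by simp
    finally show ?thesis .
  qed
  have RF: "\<forall>x\<in>D. \<forall>y\<in>D. (R, [x, y]) \<in> ?\<omega> \<longleftrightarrow> (\<exists>i\<in>{1..k}. (f i, [x, y]) \<in> ?\<omega>)"
  proof (intro ballI)
    fix x y assume x: "x\<in>D" and y: "y\<in>D"
    have "(R, [x, y]) \<in> ?\<omega> \<longleftrightarrow> (R,[x,y])\<in>\<omega>0" by (rule Psi_R)
    also have "\<dots> \<longleftrightarrow> y \<in> Sx D R \<omega>0 x" using y by (simp add: Sx_def)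
    also have "\<dots> \<longleftrightarrow> y \<in> set (\<psi> x)" using setp(1)[OF x] by simp
    also have "\<dots> \<longleftrightarrow> (\<exists>n<k. y = \<psi> x ! n)" unfolding in_set_conv_nth setp(3)[OF x] by auto
    also have "\<dots> \<longleftrightarrow> (\<exists>i\<in>{1..k}. y = \<psi> x ! (i-1))"
    proof
      assume "\<exists>n<k. y = \<psi> x ! n"
      then obtain n where "n<k" "y = \<psi> x ! n" by blast
      thus "\<exists>i\<in>{1..k}. y = \<psi> x ! (i-1)" by (intro bexI[of _ "Suc n"]) auto
    next
      assume "\<exists>i\<in>{1..k}. y = \<psi> x ! (i-1)"
      then obtain i where "i\<in>{1..k}" "y = \<psi> x ! (i-1)" by blast
      thus "\<exists>n<k. y = \<psi> x ! n" by (intro exI[of _ "i-1"]) auto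
    qed
    also have "\<dots> \<longleftrightarrow> (\<exists>i\<in>{1..k}. (f i, [x, y]) \<in> ?\<omega>)"
    proof (rule bex_cong[OF refl])
      fix i assume ii: "i\<in>{1..k}"
      show "y = \<psi> x ! (i-1) \<longleftrightarrow> (f i, [x, y]) \<in> ?\<omega>" using Psi_f[OF W0 ii] x by simp
    qed
    finally show "(R, [x, y]) \<in> ?\<omega> \<longleftrightarrow> (\<exists>i\<in>{1..k}. (f i, [x, y]) \<in> ?\<omega>)" .
  qed
  have tot: "\<forall>i\<in>{1..k}. \<forall>x\<in>D. \<exists>y\<in>D. (f i, [x, y]) \<in> ?\<omega>"
  proof (intro ballI)
    fix i x assume i: "i\<in>{1..k}" and x: "x\<in>D"
    have "(f i, [x, \<psi> x ! (i-1)]) \<in> ?\<omega>" using Psi_f[OF W0 i] x by simp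
    moreover have "\<psi> x ! (i-1) \<in> D" using nthD[OF x i] SxD by blast
    ultimately show "\<exists>y\<in>D. (f i, [x, y]) \<in> ?\<omega>" by blast
  qed
  have dis: "\<forall>i\<in>{1..k}. \<forall>j\<in>{1..k}. i \<noteq> j \<longrightarrow>
        (\<forall>x\<in>D. \<forall>y\<in>D. (f i, [x, y]) \<notin> ?\<omega> \<or> (f j, [x, y]) \<notin> ?\<omega>)"
  proof (intro ballI impI)
    fix i j x y assume i: "i\<in>{1..k}" and j: "j\<in>{1..k}" and ij: "i\<noteq>j" and x: "x\<in>D" and y: "y\<in>D"
    show "(f i, [x, y]) \<notin> ?\<omega> \<or> (f j, [x, y]) \<notin> ?\<omega>"
    proof (rule ccontr)
      assume "\<not> ?thesis"
      hence "\<psi> x ! (i-1) = \<psi> x ! (j-1)" using Psi_f[OF W0 i] Psi_f[OF W0 j] by auto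
      moreover have "i-1 < length (\<psi> x)" "j-1 < length (\<psi> x)" using i j setp[OF x] by auto
      ultimately have "i-1 = j-1" by (simp add: nth_eq_iff_index_eq[OF setp(2)[OF x]])
      with i j ij show False by auto
    qed
  qed
  show "Phi R f k D ?\<omega>" unfolding Phi_def by (intro conjI NR RF tot dis)
qed


lemma fiber_super:
  assumes W0: "\<omega>0 \<in> worlds L ar D"
    and W: "\<omega> \<in> worlds (L \<union> f ` {1..k}) ar D" and P: "Phi R f k D \<omega>" and rs: "restr L \<omega> = \<omega>0"
  shows "\<exists>\<psi>\<in>(\<Pi>\<^sub>E x\<in>D. permutations_of_set (Sx D R \<omega>0 x)). \<omega> = Psi f k D \<omega>0 \<psi>"
proof -
  define t where "t i x = (THE y. (f i,[x,y]) \<in> \<omega>)" for i x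
  have st: "\<forall>x\<in>D. card (Sx D R \<omega> x) = k \<and> (\<forall>i\<in>{1..k}. \<exists>!y. (f i, [x,y]) \<in> \<omega>)"
    by (rule Phi_struct[OF fin arR W P])
  from P have RF: "\<forall>x\<in>D. \<forall>y\<in>D. (R, [x, y]) \<in> \<omega> \<longleftrightarrow> (\<exists>i\<in>{1..k}. (f i, [x, y]) \<in> \<omega>)"
    and dis: "\<forall>i\<in>{1..k}. \<forall>j\<in>{1..k}. i \<noteq> j \<longrightarrow>
        (\<forall>x\<in>D. \<forall>y\<in>D. (f i, [x, y]) \<notin> \<omega> \<or> (f j, [x, y]) \<notin> \<omega>)"
    unfolding Phi_def by auto
  have ex1: "\<exists>!y. (f i,[x,y]) \<in> \<omega>" if "x\<in>D" "i\<in>{1..k}" for x i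
    using st that by blast
  have tP: "(f i,[x,t i x]) \<in> \<omega>" if "x\<in>D" "i\<in>{1..k}" for x i
    unfolding t_def by (rule theI'[OF ex1[OF that]])
  have tU: "y = t i x" if "x\<in>D" "i\<in>{1..k}" "(f i,[x,y]) \<in> \<omega>" for x i y
    unfolding t_def by (rule the1_equality[OF ex1[OF that(1,2)] that(3), symmetric])
  have tD: "t i x \<in> D" if "x\<in>D" "i\<in>{1..k}" for x i
    using ga_mem[OF W tP[OF that]] by simp
  have SxE: "Sx D R \<omega>0 x = Sx D R \<omega> x" for x using Sx_restr rs by metis
  have tS: "t i x \<in> Sx D R \<omega>0 x" if "x\<in>D" "i\<in>{1..k}" for x i
  proof -
    have "t i x \<in> Sx D R \<omega> x" using RF that tP[OF that] tD[OF that] unfolding Sx_def by blast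
    thus ?thesis using SxE by simp
  qed
  have tinj: "inj_on (\<lambda>i. t i x) {1..k}" if x: "x\<in>D" for x
  proof (rule inj_onI)
    fix i j assume ij: "i\<in>{1..k}" "j\<in>{1..k}" "t i x = t j x"
    show "i = j"
    proof (rule ccontr)
      assume "i \<noteq> j"
      with dis ij x tP[OF x ij(1)] tP[OF x ij(2)] tD[OF x ij(1)] show False by metis
    qed
  qed
  have finS: "finite (Sx D R \<omega>0 x)" for x using fin by (simp add: Sx_def)
  have img: "(\<lambda>i. t i x) ` {1..k} = Sx D R \<omega>0 x" if x: "x\<in>D" for x
  proof -
    have sub: "(\<lambda>i. t i x) ` {1..k} \<subseteq> Sx D R \<omega>0 x" using tS x by blast
    have "card ((\<lambda>i. t i x) ` {1..k}) = k" using card_image[OF tinj[OF x]] by simp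
    moreover have "card (Sx D R \<omega>0 x) = k" using st x SxE by simp
    ultimately show ?thesis using card_subset_eq[OF finS sub] by simp
  qed
  define \<psi> where "\<psi> = (\<lambda>x\<in>D. map (\<lambda>i. t i x) [1..<Suc k])"
  have upt: "set [1..<Suc k] = {1..k}" by auto
  have \<psi>P: "\<psi> \<in> (\<Pi>\<^sub>E x\<in>D. permutations_of_set (Sx D R \<omega>0 x))"
  proof (rule PiE_I)
    fix x assume x: "x\<in>D"
    have "set (\<psi> x) = Sx D R \<omega>0 x" using x img[OF x] upt by (simp add: \<psi>_def)
    moreover have "distinct (\<psi> x)" using x tinj[OF x] upt by (simp add: \<psi>_def distinct_map)
    ultimately show "\<psi> x \<in> permutations_of_set (Sx D R \<omega>0 x)" by blast
  next
    fix x assume "x \<notin> D" thus "\<psi> x = undefined" by (simp add: \<psi>_def)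
  qed
  have \<psi>nth: "\<psi> x ! (i-1) = t i x" if x: "x\<in>D" and i: "i\<in>{1..k}" for x i
  proof -
    have "i - 1 < length [1..<Suc k]" using i by auto
    hence "map (\<lambda>i. t i x) [1..<Suc k] ! (i-1) = t ([1..<Suc k] ! (i-1)) x" by (rule nth_map)
    moreover have "[1..<Suc k] ! (i-1) = i" using i by (subst nth_upt) auto
    ultimately show ?thesis using x by (simp add: \<psi>_def)
  qed
  have "\<omega> = Psi f k D \<omega>0 \<psi>"
  proof (rule set_eqI, rule iffI)
    fix a assume a: "a \<in> \<omega>"
    obtain P xs where Pxs: "a = (P,xs)" by force
    have g: "P \<in> L \<union> f ` {1..k}" "length xs = ar P" "set xs \<subseteq> D" using ga_mem[OF W] a Pxs by auto
    show "a \<in> Psi f k D \<omega>0 \<psi>"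
    proof (cases "P \<in> L")
      case True
      hence "a \<in> restr L \<omega>" using a Pxs by (simp add: restr_def)
      thus ?thesis using rs by (simp add: Psi_def)
    next
      case False
      then obtain i where i: "i\<in>{1..k}" "P = f i" using g(1) by blast
      have "length xs = 2" using g(2) i fL by simp
      then obtain x y where xy: "xs = [x,y]" using len2 by blast
      with g have xyD: "x\<in>D" "y\<in>D" by auto
      have "y = t i x" using tU[OF xyD(1) i(1)] a Pxs i xy by simp
      hence "y = \<psi> x ! (i-1)" using \<psi>nth[OF xyD(1) i(1)] by simp
      thus ?thesis using Psi_f[OF W0 i(1)] xyD Pxs i xy by simp
    qed
  next
    fix a assume a: "a \<in> Psi f k D \<omega>0 \<psi>"
    show "a \<in> \<omega>"
    proof (cases "a \<in> \<omega>0")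
      case True thus ?thesis using rs by (auto simp: restr_def)
    next
      case False
      with a obtain x i where "a = (f i, [x, \<psi> x ! (i-1)])" "x\<in>D" "i\<in>{1..k}"
        unfolding Psi_def by blast
      thus ?thesis using tP \<psi>nth by simp
    qed
  qed
  thus ?thesis using \<psi>P by blast
qed

lemma Psi_inj:
  assumes W0: "\<omega>0 \<in> worlds L ar D" and E: "exactly_k R k D \<omega>0"
  shows "inj_on (Psi f k D \<omega>0) (\<Pi>\<^sub>E x\<in>D. permutations_of_set (Sx D R \<omega>0 x))"
proof (rule inj_onI)
  fix \<psi> \<psi>' assume p: "\<psi> \<in> (\<Pi>\<^sub>E x\<in>D. permutations_of_set (Sx D R \<omega>0 x))"
    and p': "\<psi>' \<in> (\<Pi>\<^sub>E x\<in>D. permutations_of_set (Sx D R \<omega>0 x))"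
    and eq: "Psi f k D \<omega>0 \<psi> = Psi f k D \<omega>0 \<psi>'"
  have ck: "card (Sx D R \<omega>0 x) = k" if "x\<in>D" for x
    using E that by (simp add: exactly_k_def Sx_def)
  show "\<psi> = \<psi>'"
  proof (rule PiE_ext[OF p p'])
    fix x assume x: "x\<in>D"
    have l: "length (\<psi> x) = k" "length (\<psi>' x) = k"
      using p p' x ck[OF x] length_finite_permutations_of_set by (auto simp: PiE_iff)
    show "\<psi> x = \<psi>' x"
    proof (rule nth_equalityI)
      show "length (\<psi> x) = length (\<psi>' x)" using l by simp
    next
      fix n assume "n < length (\<psi> x)"
      hence i: "Suc n \<in> {1..k}" using l by auto
      have "(f (Suc n), [x, \<psi> x ! n]) \<in> Psi f k D \<omega>0 \<psi>" using Psi_f[OF W0 i] x by simp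
      hence "(f (Suc n), [x, \<psi> x ! n]) \<in> Psi f k D \<omega>0 \<psi>'" using eq by simp
      thus "\<psi> x ! n = \<psi>' x ! n" using Psi_f[OF W0 i] by simp
    qed
  qed
qed

lemma fiber_card:
  assumes W0: "\<omega>0 \<in> worlds L ar D" and E: "exactly_k R k D \<omega>0"
  shows "card {\<omega> \<in> worlds (L \<union> f ` {1..k}) ar D. Phi R f k D \<omega> \<and> restr L \<omega> = \<omega>0} = fact k ^ card D"
proof -
  let ?P = "\<Pi>\<^sub>E x\<in>D. permutations_of_set (Sx D R \<omega>0 x)"
  have "{\<omega> \<in> worlds (L \<union> f ` {1..k}) ar D. Phi R f k D \<omega> \<and> restr L \<omega> = \<omega>0} = Psi f k D \<omega>0 ` ?P"
  proof (rule set_eqI, rule iffI)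
    fix \<omega> assume "\<omega> \<in> {\<omega> \<in> worlds (L \<union> f ` {1..k}) ar D. Phi R f k D \<omega> \<and> restr L \<omega> = \<omega>0}"
    thus "\<omega> \<in> Psi f k D \<omega>0 ` ?P" using fiber_super[OF W0] by blast
  next
    fix \<omega> assume "\<omega> \<in> Psi f k D \<omega>0 ` ?P"
    then obtain \<psi> where "\<psi> \<in> ?P" "\<omega> = Psi f k D \<omega>0 \<psi>" by blast
    thus "\<omega> \<in> {\<omega> \<in> worlds (L \<union> f ` {1..k}) ar D. Phi R f k D \<omega> \<and> restr L \<omega> = \<omega>0}"
      using fiber_sub[OF W0 E] by blast
  qed
  hence "card {\<omega> \<in> worlds (L \<union> f ` {1..k}) ar D. Phi R f k D \<omega> \<and> restr L \<omega> = \<omega>0} = card ?P"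
    using card_image[OF Psi_inj[OF W0 E]] by simp
  also have "\<dots> = (\<Prod>x\<in>D. card (permutations_of_set (Sx D R \<omega>0 x)))" using fin by (rule card_PiE)
  also have "\<dots> = (\<Prod>x\<in>D. fact k)"
  proof (rule prod.cong[OF refl])
    fix x assume "x\<in>D"
    hence "card (Sx D R \<omega>0 x) = k" using E by (simp add: exactly_k_def Sx_def)
    moreover have "finite (Sx D R \<omega>0 x)" using fin by (simp add: Sx_def)
    ultimately show "card (permutations_of_set (Sx D R \<omega>0 x)) = fact k" by simp
  qed
  also have "\<dots> = fact k ^ card D" by simp
  finally show ?thesis .
qed

end


lemma finite_ga:
  assumes "finite L" "finite D"
  shows "finite (ground_atoms L ar D)"
proof -
  have "ground_atoms L ar D = (SIGMA P:L. {xs. set xs \<subseteq> D \<and> length xs = ar P})"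
    by (auto simp: ground_atoms_def)
  thus ?thesis using assms by (simp add: finite_lists_length_eq)
qed

lemma finite_worlds: "finite L \<Longrightarrow> finite D \<Longrightarrow> finite (worlds L ar D)"
  by (simp add: worlds_def finite_ga)

lemma N_restr_gen: "P \<in> L \<Longrightarrow> N P (restr L \<omega>) = N P \<omega>"
  by (auto simp: N_def restr_def)

theorem lemma2:
  fixes D :: "'d set" and L :: "'p set" and ar :: "'p \<Rightarrow> nat"
    and R :: 'p and k :: nat and \<Gamma> :: "'p fm" and f :: "nat \<Rightarrow> 'p"
    and w wb :: "'p \<Rightarrow> real"
  assumes "finite D" and "finite L"
    and "R \<in> L" and "ar R = 2"
    and "k \<ge> 1"
    and "fo_sentence L ar \<Gamma>"
    and "inj_on f {1..k}"
    and "\<forall>i\<in>{1..k}. f i \<notin> L \<and> ar (f i) = 2"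
    and "\<forall>i\<in>{1..k}. w (f i) = 1 \<and> wb (f i) = 1"
  shows "WFOMC (\<lambda>\<omega>. models D \<omega> \<Gamma> \<and> exactly_k R k D \<omega>) w wb L ar D
       = 1 / (fact k) ^ card D
         * WFOMC (\<lambda>\<omega>. models D \<omega> \<Gamma> \<and> Phi R f k D \<omega>) w wb (L \<union> f ` {1..k}) ar D"
proof -
  note fin = assms(1) and finL = assms(2) and RL = assms(3) and arR = assms(4)
    and fo = assms(6) and injf = assms(7) and fL = assms(8) and wf = assms(9)
  define L' where "L' = L \<union> f ` {1..k}"
  define wt where "wt (\<omega> :: ('p,'d) world) = (\<Prod>P\<in>L. w P ^ N P \<omega> * wb P ^ (card D ^ ar P - N P \<omega>))" for \<omega>
  define A where "A = {\<omega> \<in> worlds L ar D. models D \<omega> \<Gamma> \<and> exactly_k R k D \<omega>}"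
  define A' where "A' = {\<omega> \<in> worlds L' ar D. models D \<omega> \<Gamma> \<and> Phi R f k D \<omega>}"
  have lhs: "WFOMC (\<lambda>\<omega>. models D \<omega> \<Gamma> \<and> exactly_k R k D \<omega>) w wb L ar D = (\<Sum>\<omega>\<in>A. wt \<omega>)"
    unfolding WFOMC_def A_def wt_def by simp
  have wt': "(\<Prod>P\<in>L'. w P ^ N P \<omega> * wb P ^ (card D ^ ar P - N P \<omega>)) = wt (restr L \<omega>)" for \<omega>
  proof -
    have disj: "L \<inter> f ` {1..k} = {}" using fL by auto
    have one: "(\<Prod>P\<in>f ` {1..k}. w P ^ N P \<omega> * wb P ^ (card D ^ ar P - N P \<omega>)) = 1"
      using wf by (intro prod.neutral) auto
    have "(\<Prod>P\<in>L'. w P ^ N P \<omega> * wb P ^ (card D ^ ar P - N P \<omega>)) = wt \<omega>"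
      unfolding L'_def wt_def prod.union_disjoint[OF finL finite_imageI[OF finite_atLeastAtMost] disj] one by simp
    also have "\<dots> = wt (restr L \<omega>)" unfolding wt_def
      by (rule prod.cong[OF refl]) (simp add: N_restr_gen)
    finally show ?thesis .
  qed
  have rhs: "WFOMC (\<lambda>\<omega>. models D \<omega> \<Gamma> \<and> Phi R f k D \<omega>) w wb (L \<union> f ` {1..k}) ar D
      = (\<Sum>\<omega>\<in>A'. wt (restr L \<omega>))"
    unfolding WFOMC_def A'_def L'_def[symmetric] using wt' by simp
  have finA: "finite A" using finite_worlds[OF finL fin] by (simp add: A_def)
  have finA': "finite A'" using finite_worlds[of L' D ar] finL fin by (simp add: A'_def L'_def)
  have imgA: "restr L ` A' \<subseteq> A"
  proof
    fix \<omega>0 assume "\<omega>0 \<in> restr L ` A'"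
    then obtain \<omega> where \<omega>: "\<omega> \<in> A'" "\<omega>0 = restr L \<omega>" by blast
    have W: "\<omega> \<in> worlds L' ar D" and M: "models D \<omega> \<Gamma>" and P: "Phi R f k D \<omega>"
      using \<omega>(1) by (auto simp: A'_def)
    have "\<omega>0 \<in> worlds L ar D" using W \<omega>(2)
      by (auto simp: worlds_def ground_atoms_def restr_def)
    moreover have "models D \<omega>0 \<Gamma>" using M models_restr[OF fo] \<omega>(2) by blast
    moreover have "exactly_k R k D \<omega>0"
    proof -
      have "\<forall>x\<in>D. card (Sx D R \<omega> x) = k" using Phi_struct[OF fin arR W P] by blast
      thus ?thesis using Sx_restr[OF fin RL arR injf fL] \<omega>(2) by (simp add: exactly_k_def Sx_def)
    qed
    ultimately show "\<omega>0 \<in> A" by (simp add: A_def)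
  qed
  have "(\<Sum>\<omega>\<in>A'. wt (restr L \<omega>)) = (\<Sum>\<omega>0\<in>A. \<Sum>\<omega>\<in>{\<omega>\<in>A'. restr L \<omega> = \<omega>0}. wt (restr L \<omega>))"
    by (rule sum.group[OF finA' finA imgA, symmetric])
  also have "\<dots> = (\<Sum>\<omega>0\<in>A. fact k ^ card D * wt \<omega>0)"
  proof (rule sum.cong[OF refl])
    fix \<omega>0 assume a: "\<omega>0 \<in> A"
    hence W0: "\<omega>0 \<in> worlds L ar D" and M0: "models D \<omega>0 \<Gamma>" and E: "exactly_k R k D \<omega>0"
      by (auto simp: A_def)
    have set: "{\<omega>\<in>A'. restr L \<omega> = \<omega>0} = {\<omega> \<in> worlds L' ar D. Phi R f k D \<omega> \<and> restr L \<omega> = \<omega>0}"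
      using M0 models_restr[OF fo] by (auto simp: A'_def)
    have "(\<Sum>\<omega>\<in>{\<omega>\<in>A'. restr L \<omega> = \<omega>0}. wt (restr L \<omega>)) = (\<Sum>\<omega>\<in>{\<omega>\<in>A'. restr L \<omega> = \<omega>0}. wt \<omega>0)"
      by (rule sum.cong) auto
    also have "\<dots> = card {\<omega>\<in>A'. restr L \<omega> = \<omega>0} * wt \<omega>0" by simp
    also have "card {\<omega>\<in>A'. restr L \<omega> = \<omega>0} = fact k ^ card D"
      unfolding set L'_def by (rule fiber_card[OF fin RL arR injf fL W0 E])
    finally show "(\<Sum>\<omega>\<in>{\<omega>\<in>A'. restr L \<omega> = \<omega>0}. wt (restr L \<omega>)) = fact k ^ card D * wt \<omega>0"
      by simp
  qed
  also have "\<dots> = fact k ^ card D * (\<Sum>\<omega>\<in>A. wt \<omega>)" by (simp add: sum_distrib_left)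
  finally have "WFOMC (\<lambda>\<omega>. models D \<omega> \<Gamma> \<and> Phi R f k D \<omega>) w wb (L \<union> f ` {1..k}) ar D
      = fact k ^ card D * WFOMC (\<lambda>\<omega>. models D \<omega> \<Gamma> \<and> exactly_k R k D \<omega>) w wb L ar D"
    using rhs lhs by simp
  moreover have "(fact k :: real) ^ card D \<noteq> 0" by simp
  ultimately show ?thesis by simp
qed

end
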